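(* Let $u$ be a set, $F,G$ conjunctive set transformers on $u$ with $F(u)=u$ and $G(u)=u$, and $q\subseteq u$. Then $X(q)(\varnothing)$ equals the least fixpoint of the monotone map ${\cal F}(q)(\varnothing):Y\mapsto q\cup(G(\varnothing)\cap F(Y))$ on $\mathbb{P}(u)$; equivalently, the guard $\overline{X(q)(\varnothing)}$ of $X(q)$ is the complement of this least fixpoint.
   Context: A set transformer on $u$ is a map $E:\mathbb{P}(u)\to\mathbb{P}(u)$; it is conjunctive if it preserves intersections of nonempty families of subsets (in particular it is monotone). For $a\subseteq u$, $\overline{a}=u\setminus a$; $\mathrm{grd}(E)=\overline{E(\varnothing)}$. The fair iteration $X(q)=\overline{q}\Longrightarrow((F\,;X(q))\mathrel{\triangledown} G)$ (guarded command, sequencing, and dovetail/fair choice) is the set transformer $X(q)(r)={\cal L}(X(q))(r)\cap\mathrm{pre}(X(q))$ where: the liberal part ${\cal L}(X(q))(r)$ is the greatest fixpoint of the monotone map $Y\mapsto q\cup(G(r)\cap F(Y))$ on $\mathbb{P}(u)$, and the termination set $\mathrm{pre}(X(q))$ is the least fixpoint of the monotone map $Y\mapsto q\cup\mathrm{grd}(G)\cup F(Y)$. *)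

theory Defs
  imports Main
begin

text \<open>The universe u is rendered as the type 'a (u = UNIV), so P(u) = 'a set and
  the complement of a relative to u is - a.\<close>

definition conjunctive :: "('a set \<Rightarrow> 'a set) \<Rightarrow> bool" where
  "conjunctive E \<longleftrightarrow> (\<forall>S :: 'a set set. S \<noteq> {} \<longrightarrow> E (\<Inter> S) = (\<Inter>A\<in>S. E A))"

definition grd :: "('a set \<Rightarrow> 'a set) \<Rightarrow> 'a set" where
  "grd E = - E {}"

definition fair_lib :: "('a set \<Rightarrow> 'a set) \<Rightarrow> ('a set \<Rightarrow> 'a set) \<Rightarrow> 'a set \<Rightarrow> 'a set \<Rightarrow> 'a set" where
  "fair_lib F G q r = gfp (\<lambda>Y. q \<union> (G r \<inter> F Y))"

definition fair_pre :: "('a set \<Rightarrow> 'a set) \<Rightarrow> ('a set \<Rightarrow> 'a set) \<Rightarrow> 'a set \<Rightarrow> 'a set" where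
  "fair_pre F G q = lfp (\<lambda>Y. q \<union> grd G \<union> F Y)"

text \<open>The fair iteration X(q) = not q ==> ((F ; X(q)) dovetail G).\<close>
definition fair_iter :: "('a set \<Rightarrow> 'a set) \<Rightarrow> ('a set \<Rightarrow> 'a set) \<Rightarrow> 'a set \<Rightarrow> 'a set \<Rightarrow> 'a set" where
  "fair_iter F G q r = fair_lib F G q r \<inter> fair_pre F G q"

end

theory Submission
  imports Defs
begin

lemma conj_int:
  assumes "conjunctive F" shows "F (A \<inter> B) = F A \<inter> F B"
proof -
  have "F (\<Inter>{A, B}) = (\<Inter>X\<in>{A,B}. F X)" using assms unfolding conjunctive_def by (metis insert_not_empty)
  then show ?thesis by simp
qed

lemma conj_mono:
  assumes "conjunctive F" shows "mono F"
proof (rule monoI)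
  fix A B :: "'a set" assume "A \<subseteq> B"
  then have "A \<inter> B = A" by blast
  then have "F A = F A \<inter> F B" using conj_int[OF assms, of A B] by simp
  then show "F A \<subseteq> F B" by (metis Int_lower2)
qed

theorem lemma4:
  fixes F G :: "'a set \<Rightarrow> 'a set" and q :: "'a set"
  assumes "conjunctive F" and "conjunctive G"
    and "F UNIV = UNIV" and "G UNIV = UNIV"
  shows "fair_iter F G q {} = lfp (\<lambda>Y. q \<union> (G {} \<inter> F Y))
         \<and> grd (fair_iter F G q) = - lfp (\<lambda>Y. q \<union> (G {} \<inter> F Y))"
proof -
  have mF: "mono F" by (rule conj_mono[OF assms(1)])
  define g where "g = G {}"
  define L where "L = gfp (\<lambda>Y. q \<union> (g \<inter> F Y))"
  define P where "P = lfp (\<lambda>Y. q \<union> - g \<union> F Y)"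
  define M where "M = lfp (\<lambda>Y. q \<union> (g \<inter> F Y))"
  have mA: "mono (\<lambda>Y. q \<union> (g \<inter> F Y))" using mF by (auto simp: mono_def)
  have mB: "mono (\<lambda>Y. q \<union> - g \<union> F Y)" using mF by (auto simp: mono_def)
  have Lfix: "L = q \<union> (g \<inter> F L)" unfolding L_def using gfp_unfold[OF mA] .
  have Mfix: "M = q \<union> (g \<inter> F M)" unfolding M_def using lfp_unfold[OF mA] .
  have M_le_L: "M \<subseteq> L" unfolding M_def L_def by (rule lfp_le_gfp[OF mA])
  have M_le_P: "M \<subseteq> P" unfolding M_def P_def by (rule lfp_mono) blast
  have "P \<subseteq> - L \<union> M" unfolding P_def
  proof (rule lfp_lowerbound)
    show "q \<union> - g \<union> F (- L \<union> M) \<subseteq> - L \<union> M"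
    proof
      fix x assume x: "x \<in> q \<union> - g \<union> F (- L \<union> M)"
      show "x \<in> - L \<union> M"
      proof (cases "x \<in> L")
        case False then show ?thesis by blast
      next
        case True
        show ?thesis
        proof (cases "x \<in> q")
          case True then show ?thesis using Mfix by blast
        next
          case False
          with \<open>x \<in> L\<close> Lfix have xg: "x \<in> g" and xFL: "x \<in> F L" by blast+
          with x False have "x \<in> F (- L \<union> M)" by blast
          with xFL have "x \<in> F L \<inter> F (- L \<union> M)" by blast
          then have "x \<in> F (L \<inter> (- L \<union> M))" by (simp only: conj_int[OF assms(1)])
          moreover have "F (L \<inter> (- L \<union> M)) \<subseteq> F M" using mF by (rule monoD) blast
          ultimately show ?thesis using xg Mfix by blast
        qed
      qed
    qed
  qed
  then have eq: "L \<inter> P = M" using M_le_L M_le_P by blast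
  have 1: "fair_iter F G q {} = lfp (\<lambda>Y. q \<union> (G {} \<inter> F Y))"
    using eq unfolding fair_iter_def fair_lib_def fair_pre_def grd_def L_def P_def M_def g_def .
  have "grd (fair_iter F G q) = - fair_iter F G q {}" by (simp add: grd_def)
  with 1 show ?thesis by simp
qed

end
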